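(* Let $\mathcal C$ be a $\dagger$-compact category with bases. For each object $A$ put $\epsilon_A:=\gamma_A\circ\delta_A^\dagger\circ(1_A\otimes d_A^\dagger):A\otimes A^*\to I$. Then each $(A,\epsilon_A)$ is a $\dagger$-compact structure, and for every object $A$ one has $\epsilon_{A^*}=\epsilon_A\circ\sigma_{A^*,A}$ (as morphisms $A^*\otimes A\to I$, using $(A^* )^*=A$). Consequently $\mathcal C$ is a $\dagger$-compact category.
   Context: A $\dagger$-symmetric monoidal category ($\dagger$-SMC) is a symmetric monoidal category (associativity and unit isomorphisms taken strict, symmetry $\sigma_{A,B}$) with an involutive, identity-on-objects contravariant functor $\dagger$ satisfying $(g\circ f)^\dagger=f^\dagger\circ g^\dagger$, $f^{\dagger\dagger}=f$, $(f\otimes g)^\dagger=f^\dagger\otimes g^\dagger$, $\sigma^\dagger=\sigma^{-1}$. A morphism is unitary if invertible with inverse its dagger. A $\dagger$-Frobenius structure is a co-commutative comonoid $(A,\delta_A:A\to A\otimes A,\gamma_A:A\to I)$ with $\delta_A^\dagger\circ\delta_A=1_A$ and $\delta_A\circ\delta_A^\dagger=(\delta_A^\dagger\otimes 1_A)\circ(1_A\otimes\delta_A)$. For $\dagger$-Frobenius structures on $A$ and $B$, a morphism $f:A\to B$ is a permutation if $\delta_B\circ f=(f\otimes f)\circ\delta_A$, $\gamma_B\circ f=\gamma_A$, and $f$ is unitary. A $\dagger$-compact structure is a pair $(A,\epsilon_A:A\otimes A^*\to I)$ with $(\epsilon_A\otimes 1_A)\circ(1_A\otimes\sigma_{A,A^*})\circ(1_A\otimes\epsilon_A^\dagger)=1_A$.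 A $\dagger$-compact category is a $\dagger$-SMC in which each object $A$ has a $\dagger$-compact structure $(A,\epsilon_A)$ such that $\epsilon_{A^*}=\epsilon_A\circ\sigma_{A^*,A}$. A $\dagger$-compact category with bases is a $\dagger$-SMC in which every object $A$ comes with an object $A^*$ and a $\dagger$-dual Frobenius structure $(A,\delta_A,\gamma_A,d_A:A\to A^* )$ (i.e. $(A,\delta_A,\gamma_A)$ is $\dagger$-Frobenius and $d_A$ is unitary), such that $d_{A^*}=d_A^\dagger$ (in particular $(A^* )^*=A$) and $d_A$ is a permutation with respect to the $\dagger$-Frobenius structures on $A$ and $A^*$. *)

theory Defs
  imports Main
begin

text \<open>Objects are all elements of type 'o; morphisms are the elements of the set c_arr
  of type 'm. Composition c_comp g f means g after f.\<close>

record ('o, 'm) dsmc =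
  c_arr :: "'m set"
  c_dom :: "'m \<Rightarrow> 'o"
  c_cod :: "'m \<Rightarrow> 'o"
  c_comp :: "'m \<Rightarrow> 'm \<Rightarrow> 'm"
  c_id :: "'o \<Rightarrow> 'm"
  c_otensor :: "'o \<Rightarrow> 'o \<Rightarrow> 'o"
  c_tensor :: "'m \<Rightarrow> 'm \<Rightarrow> 'm"
  c_unit :: "'o"
  c_sym :: "'o \<Rightarrow> 'o \<Rightarrow> 'm"
  c_dag :: "'m \<Rightarrow> 'm"

definition c_hom :: "('o, 'm) dsmc \<Rightarrow> 'o \<Rightarrow> 'o \<Rightarrow> 'm set" where
  "c_hom C A B = {f \<in> c_arr C. c_dom C f = A \<and> c_cod C f = B}"

definition is_category :: "('o, 'm) dsmc \<Rightarrow> bool" where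
  "is_category C \<longleftrightarrow>
     (\<forall>A. c_id C A \<in> c_hom C A A) \<and>
     (\<forall>f \<in> c_arr C. \<forall>g \<in> c_arr C. c_cod C f = c_dom C g \<longrightarrow>
        c_comp C g f \<in> c_hom C (c_dom C f) (c_cod C g)) \<and>
     (\<forall>f \<in> c_arr C. \<forall>g \<in> c_arr C. \<forall>h \<in> c_arr C.
        c_cod C f = c_dom C g \<longrightarrow> c_cod C g = c_dom C h \<longrightarrow>
        c_comp C h (c_comp C g f) = c_comp C (c_comp C h g) f) \<and>
     (\<forall>f \<in> c_arr C. c_comp C f (c_id C (c_dom C f)) = f \<and>
                      c_comp C (c_id C (c_cod C f)) f = f)"

definition is_strict_monoidal :: "('o, 'm) dsmc \<Rightarrow> bool" where
  "is_strict_monoidal C \<longleftrightarrow>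
     (\<forall>A B A' B' f g. f \<in> c_hom C A B \<longrightarrow> g \<in> c_hom C A' B' \<longrightarrow>
        c_tensor C f g \<in> c_hom C (c_otensor C A A') (c_otensor C B B')) \<and>
     (\<forall>A B. c_tensor C (c_id C A) (c_id C B) = c_id C (c_otensor C A B)) \<and>
     (\<forall>f \<in> c_arr C. \<forall>g \<in> c_arr C. \<forall>f' \<in> c_arr C. \<forall>g' \<in> c_arr C.
        c_cod C f = c_dom C g \<longrightarrow> c_cod C f' = c_dom C g' \<longrightarrow>
        c_comp C (c_tensor C g g') (c_tensor C f f') =
        c_tensor C (c_comp C g f) (c_comp C g' f')) \<and>
     (\<forall>A B D. c_otensor C (c_otensor C A B) D = c_otensor C A (c_otensor C B D)) \<and>
     (\<forall>f \<in> c_arr C. \<forall>g \<in> c_arr C. \<forall>h \<in> c_arr C.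
        c_tensor C (c_tensor C f g) h = c_tensor C f (c_tensor C g h)) \<and>
     (\<forall>A. c_otensor C (c_unit C) A = A \<and> c_otensor C A (c_unit C) = A) \<and>
     (\<forall>f \<in> c_arr C. c_tensor C (c_id C (c_unit C)) f = f \<and>
                      c_tensor C f (c_id C (c_unit C)) = f)"

definition is_symmetric :: "('o, 'm) dsmc \<Rightarrow> bool" where
  "is_symmetric C \<longleftrightarrow>
     (\<forall>A B. c_sym C A B \<in> c_hom C (c_otensor C A B) (c_otensor C B A)) \<and>
     (\<forall>A A' B B' f g. f \<in> c_hom C A A' \<longrightarrow> g \<in> c_hom C B B' \<longrightarrow>
        c_comp C (c_sym C A' B') (c_tensor C f g) = c_comp C (c_tensor C g f) (c_sym C A B)) \<and>
     (\<forall>A B. c_comp C (c_sym C B A) (c_sym C A B) = c_id C (c_otensor C A B)) \<and>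
     (\<forall>A B D. c_sym C A (c_otensor C B D) =
        c_comp C (c_tensor C (c_id C B) (c_sym C A D)) (c_tensor C (c_sym C A B) (c_id C D))) \<and>
     (\<forall>A. c_sym C A (c_unit C) = c_id C A)"

definition is_dagger :: "('o, 'm) dsmc \<Rightarrow> bool" where
  "is_dagger C \<longleftrightarrow>
     (\<forall>A B f. f \<in> c_hom C A B \<longrightarrow> c_dag C f \<in> c_hom C B A) \<and>
     (\<forall>f \<in> c_arr C. \<forall>g \<in> c_arr C. c_cod C f = c_dom C g \<longrightarrow>
        c_dag C (c_comp C g f) = c_comp C (c_dag C f) (c_dag C g)) \<and>
     (\<forall>f \<in> c_arr C. c_dag C (c_dag C f) = f) \<and>
     (\<forall>f \<in> c_arr C. \<forall>g \<in> c_arr C.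
        c_dag C (c_tensor C f g) = c_tensor C (c_dag C f) (c_dag C g)) \<and>
     (\<forall>A B. c_dag C (c_sym C A B) = c_sym C B A)"

definition is_dagger_smc :: "('o, 'm) dsmc \<Rightarrow> bool" where
  "is_dagger_smc C \<longleftrightarrow> is_category C \<and> is_strict_monoidal C \<and> is_symmetric C \<and> is_dagger C"

definition unitary :: "('o, 'm) dsmc \<Rightarrow> 'm \<Rightarrow> bool" where
  "unitary C f \<longleftrightarrow> f \<in> c_arr C \<and>
     c_comp C (c_dag C f) f = c_id C (c_dom C f) \<and>
     c_comp C f (c_dag C f) = c_id C (c_cod C f)"

definition dagger_frobenius :: "('o, 'm) dsmc \<Rightarrow> 'o \<Rightarrow> 'm \<Rightarrow> 'm \<Rightarrow> bool" where
  "dagger_frobenius C A \<delta> \<gamma> \<longleftrightarrow>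
     \<delta> \<in> c_hom C A (c_otensor C A A) \<and> \<gamma> \<in> c_hom C A (c_unit C) \<and>
     c_comp C (c_tensor C \<delta> (c_id C A)) \<delta> = c_comp C (c_tensor C (c_id C A) \<delta>) \<delta> \<and>
     c_comp C (c_tensor C \<gamma> (c_id C A)) \<delta> = c_id C A \<and>
     c_comp C (c_tensor C (c_id C A) \<gamma>) \<delta> = c_id C A \<and>
     c_comp C (c_sym C A A) \<delta> = \<delta> \<and>
     c_comp C (c_dag C \<delta>) \<delta> = c_id C A \<and>
     c_comp C \<delta> (c_dag C \<delta>) = c_comp C (c_tensor C (c_dag C \<delta>) (c_id C A)) (c_tensor C (c_id C A) \<delta>)"

definition is_permutation ::
  "('o, 'm) dsmc \<Rightarrow> 'o \<Rightarrow> 'm \<Rightarrow> 'm \<Rightarrow> 'o \<Rightarrow> 'm \<Rightarrow> 'm \<Rightarrow> 'm \<Rightarrow> bool" where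
  "is_permutation C A \<delta>A \<gamma>A B \<delta>B \<gamma>B f \<longleftrightarrow>
     f \<in> c_hom C A B \<and>
     c_comp C \<delta>B f = c_comp C (c_tensor C f f) \<delta>A \<and>
     c_comp C \<gamma>B f = \<gamma>A \<and>
     unitary C f"

definition dagger_compact_structure :: "('o, 'm) dsmc \<Rightarrow> 'o \<Rightarrow> 'o \<Rightarrow> 'm \<Rightarrow> bool" where
  "dagger_compact_structure C A Astar \<epsilon> \<longleftrightarrow>
     \<epsilon> \<in> c_hom C (c_otensor C A Astar) (c_unit C) \<and>
     c_comp C (c_tensor C \<epsilon> (c_id C A))
        (c_comp C (c_tensor C (c_id C A) (c_sym C A Astar))
                  (c_tensor C (c_id C A) (c_dag C \<epsilon>))) = c_id C A"

definition dagger_compact_category ::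
  "('o, 'm) dsmc \<Rightarrow> ('o \<Rightarrow> 'o) \<Rightarrow> ('o \<Rightarrow> 'm) \<Rightarrow> bool" where
  "dagger_compact_category C star eps \<longleftrightarrow> is_dagger_smc C \<and>
     (\<forall>A. dagger_compact_structure C A (star A) (eps A)) \<and>
     (\<forall>A. eps (star A) = c_comp C (eps A) (c_sym C (star A) A))"

definition dagger_compact_with_bases ::
  "('o, 'm) dsmc \<Rightarrow> ('o \<Rightarrow> 'o) \<Rightarrow> ('o \<Rightarrow> 'm) \<Rightarrow> ('o \<Rightarrow> 'm) \<Rightarrow> ('o \<Rightarrow> 'm) \<Rightarrow> bool" where
  "dagger_compact_with_bases C star \<delta> \<gamma> d \<longleftrightarrow> is_dagger_smc C \<and>
     (\<forall>A. dagger_frobenius C A (\<delta> A) (\<gamma> A) \<and>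
          d A \<in> c_hom C A (star A) \<and> unitary C (d A) \<and>
          star (star A) = A \<and>
          d (star A) = c_dag C (d A) \<and>
          is_permutation C A (\<delta> A) (\<gamma> A) (star A) (\<delta> (star A)) (\<gamma> (star A)) (d A))"

end

theory Submission imports Defs begin

locale dctx = fixes C :: "('o,'m) dsmc" assumes dsmc: "is_dagger_smc C"
begin
abbreviation arr where "arr \<equiv> c_arr C"
abbreviation dm where "dm \<equiv> c_dom C"
abbreviation cd where "cd \<equiv> c_cod C"
abbreviation cmp (infixr "\<cdot>" 55) where "g \<cdot> f \<equiv> c_comp C g f"
abbreviation tns (infixr "\<otimes>" 60) where "f \<otimes> g \<equiv> c_tensor C f g"
abbreviation ot (infixr "\<odot>" 60) where "A \<odot> B \<equiv> c_otensor C A B"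
abbreviation Id where "Id \<equiv> c_id C"
abbreviation dg where "dg \<equiv> c_dag C"
abbreviation sg where "sg \<equiv> c_sym C"
abbreviation U where "U \<equiv> c_unit C"

lemma cat: "is_category C" and mon: "is_strict_monoidal C" and sym: "is_symmetric C" and dag: "is_dagger C"
  using dsmc unfolding is_dagger_smc_def by auto

lemma id_hom: "Id A \<in> c_hom C A A" using cat unfolding is_category_def by auto
lemma id_arr[simp]: "Id A \<in> arr" and dm_id[simp]: "dm (Id A) = A" and cd_id[simp]: "cd (Id A) = A"
  using id_hom unfolding c_hom_def by auto

lemma comp_hom: "f \<in> arr \<Longrightarrow> g \<in> arr \<Longrightarrow> cd f = dm g \<Longrightarrow> g \<cdot> f \<in> c_hom C (dm f) (cd g)"
  using cat unfolding is_category_def by auto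
lemma comp_arr[simp]: "f \<in> arr \<Longrightarrow> g \<in> arr \<Longrightarrow> cd f = dm g \<Longrightarrow> g \<cdot> f \<in> arr"
  and dm_comp[simp]: "f \<in> arr \<Longrightarrow> g \<in> arr \<Longrightarrow> cd f = dm g \<Longrightarrow> dm (g \<cdot> f) = dm f"
  and cd_comp[simp]: "f \<in> arr \<Longrightarrow> g \<in> arr \<Longrightarrow> cd f = dm g \<Longrightarrow> cd (g \<cdot> f) = cd g"
  using comp_hom unfolding c_hom_def by auto
lemma assoc: "f \<in> arr \<Longrightarrow> g \<in> arr \<Longrightarrow> h \<in> arr \<Longrightarrow> cd f = dm g \<Longrightarrow> cd g = dm h \<Longrightarrow>
   (h \<cdot> g) \<cdot> f = h \<cdot> (g \<cdot> f)"
  using cat unfolding is_category_def by metis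
lemma comp_id_r[simp]: "f \<in> arr \<Longrightarrow> dm f = A \<Longrightarrow> f \<cdot> Id A = f"
  and comp_id_l[simp]: "f \<in> arr \<Longrightarrow> cd f = A \<Longrightarrow> Id A \<cdot> f = f"
  using cat unfolding is_category_def by auto

lemma tensor_hom: "f \<in> arr \<Longrightarrow> g \<in> arr \<Longrightarrow> f \<otimes> g \<in> c_hom C (dm f \<odot> dm g) (cd f \<odot> cd g)"
  using mon unfolding is_strict_monoidal_def c_hom_def by auto
lemma tensor_arr[simp]: "f \<in> arr \<Longrightarrow> g \<in> arr \<Longrightarrow> f \<otimes> g \<in> arr"
  and dm_tensor[simp]: "f \<in> arr \<Longrightarrow> g \<in> arr \<Longrightarrow> dm (f \<otimes> g) = dm f \<odot> dm g"
  and cd_tensor[simp]: "f \<in> arr \<Longrightarrow> g \<in> arr \<Longrightarrow> cd (f \<otimes> g) = cd f \<odot> cd g"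
  using tensor_hom unfolding c_hom_def by auto
lemma tensor_id[simp]: "Id A \<otimes> Id B = Id (A \<odot> B)"
  using mon unfolding is_strict_monoidal_def by auto
lemma interchange: "f \<in> arr \<Longrightarrow> g \<in> arr \<Longrightarrow> f' \<in> arr \<Longrightarrow> g' \<in> arr \<Longrightarrow> cd f = dm g \<Longrightarrow> cd f' = dm g' \<Longrightarrow>
   (g \<otimes> g') \<cdot> (f \<otimes> f') = (g \<cdot> f) \<otimes> (g' \<cdot> f')"
  using mon unfolding is_strict_monoidal_def by auto
lemma ot_assoc[simp]: "(A \<odot> B) \<odot> D = A \<odot> (B \<odot> D)"
  and ot_unit[simp]: "U \<odot> A = A" "A \<odot> U = A"
  using mon unfolding is_strict_monoidal_def by auto
lemma tensor_assoc[simp]: "f \<in> arr \<Longrightarrow> g \<in> arr \<Longrightarrow> h \<in> arr \<Longrightarrow> (f \<otimes> g) \<otimes> h = f \<otimes> (g \<otimes> h)"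
  using mon unfolding is_strict_monoidal_def by auto
lemma tensor_unit[simp]: "f \<in> arr \<Longrightarrow> Id U \<otimes> f = f" "f \<in> arr \<Longrightarrow> f \<otimes> Id U = f"
  using mon unfolding is_strict_monoidal_def by auto

lemma sym_hom: "sg A B \<in> c_hom C (A \<odot> B) (B \<odot> A)" using sym unfolding is_symmetric_def by auto
lemma sym_arr[simp]: "sg A B \<in> arr" and dm_sym[simp]: "dm (sg A B) = A \<odot> B" and cd_sym[simp]: "cd (sg A B) = B \<odot> A"
  using sym_hom unfolding c_hom_def by auto
lemma sym_nat: "f \<in> arr \<Longrightarrow> g \<in> arr \<Longrightarrow> sg (cd f) (cd g) \<cdot> (f \<otimes> g) = (g \<otimes> f) \<cdot> sg (dm f) (dm g)"
  using sym unfolding is_symmetric_def c_hom_def by auto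

lemma dag_hom: "f \<in> arr \<Longrightarrow> dg f \<in> c_hom C (cd f) (dm f)" using dag unfolding is_dagger_def c_hom_def by auto
lemma dag_arr[simp]: "f \<in> arr \<Longrightarrow> dg f \<in> arr" and dm_dag[simp]: "f \<in> arr \<Longrightarrow> dm (dg f) = cd f"
  and cd_dag[simp]: "f \<in> arr \<Longrightarrow> cd (dg f) = dm f"
  using dag_hom unfolding c_hom_def by auto
lemma dag_comp[simp]: "f \<in> arr \<Longrightarrow> g \<in> arr \<Longrightarrow> cd f = dm g \<Longrightarrow> dg (g \<cdot> f) = dg f \<cdot> dg g"
  using dag unfolding is_dagger_def by auto
lemma dag_dag[simp]: "f \<in> arr \<Longrightarrow> dg (dg f) = f" using dag unfolding is_dagger_def by auto
lemma dag_tensor[simp]: "f \<in> arr \<Longrightarrow> g \<in> arr \<Longrightarrow> dg (f \<otimes> g) = dg f \<otimes> dg g" using dag unfolding is_dagger_def by auto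
lemma dag_sym[simp]: "dg (sg A B) = sg B A" using dag unfolding is_dagger_def by auto
lemma dag_id[simp]: "dg (Id A) = Id A"
proof -
  have a: "dg (Id A) \<in> arr" "cd (dg (Id A)) = A" "dm (dg (Id A)) = A" by auto
  have e: "dg (Id A) = Id A \<cdot> dg (Id A)" using a by simp
  have "dg (dg (Id A)) = dg (Id A \<cdot> dg (Id A))" using e by (rule arg_cong)
  also have "\<dots> = dg (dg (Id A)) \<cdot> dg (Id A)" using a by (intro dag_comp) auto
  also have "\<dots> = Id A \<cdot> dg (Id A)" by simp
  also have "\<dots> = dg (Id A)" using e by simp
  finally show ?thesis by simp
qed

lemma id_tensor_comp: "x \<in> arr \<Longrightarrow> y \<in> arr \<Longrightarrow> cd y = dm x \<Longrightarrow> Id B \<otimes> (x \<cdot> y) = (Id B \<otimes> x) \<cdot> (Id B \<otimes> y)"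
  using interchange[of "Id B" "Id B" y x] by simp
lemma comp_tensor_id: "x \<in> arr \<Longrightarrow> y \<in> arr \<Longrightarrow> cd y = dm x \<Longrightarrow> (x \<cdot> y) \<otimes> Id B = (x \<otimes> Id B) \<cdot> (y \<otimes> Id B)"
  using interchange[of y x "Id B" "Id B"] by simp
end

locale bctx = dctx C for C :: "('o,'m) dsmc" +
  fixes star :: "'o \<Rightarrow> 'o" and \<delta> \<gamma> d :: "'o \<Rightarrow> 'm"
  assumes B: "dagger_compact_with_bases C star \<delta> \<gamma> d"
begin
lemma fr: "dagger_frobenius C A (\<delta> A) (\<gamma> A)" using B unfolding dagger_compact_with_bases_def by auto
lemma dl_arr[simp]: "\<delta> A \<in> arr" and dm_dl[simp]: "dm (\<delta> A) = A" and cd_dl[simp]: "cd (\<delta> A) = A \<odot> A"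
  and gm_arr[simp]: "\<gamma> A \<in> arr" and dm_gm[simp]: "dm (\<gamma> A) = A" and cd_gm[simp]: "cd (\<gamma> A) = U"
  using fr unfolding dagger_frobenius_def c_hom_def by auto
lemma counit_l: "(\<gamma> A \<otimes> Id A) \<cdot> \<delta> A = Id A" and counit_r: "(Id A \<otimes> \<gamma> A) \<cdot> \<delta> A = Id A"
  and cocomm: "sg A A \<cdot> \<delta> A = \<delta> A" and iso: "dg (\<delta> A) \<cdot> \<delta> A = Id A"
  and frob: "\<delta> A \<cdot> dg (\<delta> A) = (dg (\<delta> A) \<otimes> Id A) \<cdot> (Id A \<otimes> \<delta> A)"
  using fr unfolding dagger_frobenius_def by auto
lemma d_arr[simp]: "d A \<in> arr" and dm_d[simp]: "dm (d A) = A" and cd_d[simp]: "cd (d A) = star A"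
  using B unfolding dagger_compact_with_bases_def c_hom_def by auto
lemma ss[simp]: "star (star A) = A" and dstar: "d (star A) = dg (d A)"
  and uni1: "dg (d A) \<cdot> d A = Id A" and uni2: "d A \<cdot> dg (d A) = Id (star A)"
  and perm1: "\<delta> (star A) \<cdot> d A = (d A \<otimes> d A) \<cdot> \<delta> A"
  and perm2: "\<gamma> (star A) \<cdot> d A = \<gamma> A"
  using B unfolding dagger_compact_with_bases_def is_permutation_def unitary_def c_hom_def by auto

definition "ep A = \<gamma> A \<cdot> (dg (\<delta> A) \<cdot> (Id A \<otimes> dg (d A)))"

lemma ep_arr[simp]: "ep A \<in> arr" and dm_ep[simp]: "dm (ep A) = A \<odot> star A" and cd_ep[simp]: "cd (ep A) = U"
  unfolding ep_def by auto

lemma part1: "(ep A \<otimes> Id A) \<cdot> ((Id A \<otimes> sg A (star A)) \<cdot> (Id A \<otimes> dg (ep A))) = Id A"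
proof -
  let ?I = "Id A" and ?D = "\<delta> A" and ?G = "\<gamma> A" and ?P = "d A" and ?S = "star A"
  have de: "dg (ep A) = ((?I \<otimes> ?P) \<cdot> ?D) \<cdot> dg ?G" unfolding ep_def by simp
  have e1: "?I \<otimes> dg (ep A) = (?I \<otimes> (?I \<otimes> ?P)) \<cdot> ((?I \<otimes> ?D) \<cdot> (?I \<otimes> dg ?G))"
    unfolding de by (simp add: id_tensor_comp assoc)
  have sn: "sg A ?S \<cdot> (?I \<otimes> ?P) = (?P \<otimes> ?I) \<cdot> sg A A" using sym_nat[of ?I ?P] by simp
  have e2: "(?I \<otimes> sg A ?S) \<cdot> (?I \<otimes> (?I \<otimes> ?P)) = (?I \<otimes> (?P \<otimes> ?I)) \<cdot> (?I \<otimes> sg A A)"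
    by (simp add: id_tensor_comp[symmetric] sn)
  have e3: "(?I \<otimes> sg A A) \<cdot> (?I \<otimes> ?D) = ?I \<otimes> ?D"
    by (simp add: id_tensor_comp[symmetric] cocomm)
  have e4: "ep A \<otimes> ?I = (?G \<otimes> ?I) \<cdot> ((dg ?D \<otimes> ?I) \<cdot> ((?I \<otimes> dg ?P) \<otimes> ?I))"
    unfolding ep_def by (simp add: comp_tensor_id)
  have e5: "(?I \<otimes> (dg ?P \<otimes> ?I)) \<cdot> (?I \<otimes> (?P \<otimes> ?I)) = Id (A \<odot> A \<odot> A)"
    by (simp add: id_tensor_comp[symmetric] comp_tensor_id[symmetric] uni1)
  have e6: "dg ?D \<cdot> (?I \<otimes> dg ?G) = ?I"
  proof -
    have "dg ((?I \<otimes> ?G) \<cdot> ?D) = dg ?I" by (simp only: counit_r)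
    thus ?thesis by simp
  qed
  have M: "(?I \<otimes> sg A ?S) \<cdot> (?I \<otimes> dg (ep A)) = (?I \<otimes> (?P \<otimes> ?I)) \<cdot> ((?I \<otimes> ?D) \<cdot> (?I \<otimes> dg ?G))"
  proof -
    have "(?I \<otimes> sg A ?S) \<cdot> (?I \<otimes> dg (ep A)) = ((?I \<otimes> sg A ?S) \<cdot> (?I \<otimes> (?I \<otimes> ?P))) \<cdot> ((?I \<otimes> ?D) \<cdot> (?I \<otimes> dg ?G))"
      unfolding e1 by (simp add: assoc)
    also have "\<dots> = (?I \<otimes> (?P \<otimes> ?I)) \<cdot> (((?I \<otimes> sg A A) \<cdot> (?I \<otimes> ?D)) \<cdot> (?I \<otimes> dg ?G))"
      unfolding e2 by (simp add: assoc)
    also have "\<dots> = (?I \<otimes> (?P \<otimes> ?I)) \<cdot> ((?I \<otimes> ?D) \<cdot> (?I \<otimes> dg ?G))"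
      unfolding e3 by simp
    finally show ?thesis .
  qed
  have "(ep A \<otimes> ?I) \<cdot> ((?I \<otimes> sg A ?S) \<cdot> (?I \<otimes> dg (ep A))) =
     (?G \<otimes> ?I) \<cdot> ((dg ?D \<otimes> ?I) \<cdot> (((?I \<otimes> (dg ?P \<otimes> ?I)) \<cdot> (?I \<otimes> (?P \<otimes> ?I))) \<cdot> ((?I \<otimes> ?D) \<cdot> (?I \<otimes> dg ?G))))"
    unfolding M e4 by (simp add: assoc)
  also have "\<dots> = (?G \<otimes> ?I) \<cdot> ((dg ?D \<otimes> ?I) \<cdot> ((?I \<otimes> ?D) \<cdot> (?I \<otimes> dg ?G)))"
    unfolding e5 by simp
  also have "\<dots> = (?G \<otimes> ?I) \<cdot> (((dg ?D \<otimes> ?I) \<cdot> (?I \<otimes> ?D)) \<cdot> (?I \<otimes> dg ?G))"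
    by (simp add: assoc)
  also have "\<dots> = (?G \<otimes> ?I) \<cdot> ((?D \<cdot> dg ?D) \<cdot> (?I \<otimes> dg ?G))"
    unfolding frob by simp
  also have "\<dots> = ((?G \<otimes> ?I) \<cdot> ?D) \<cdot> (dg ?D \<cdot> (?I \<otimes> dg ?G))"
    by (simp add: assoc)
  also have "\<dots> = ?I" by (simp add: counit_l e6)
  finally show ?thesis .
qed
lemma part2: "ep (star A) = ep A \<cdot> sg (star A) A"
proof -
  let ?I = "Id A" and ?D = "\<delta> A" and ?G = "\<gamma> A" and ?P = "d A" and ?S = "star A"
  have g: "\<gamma> ?S = ?G \<cdot> dg ?P"
  proof -
    have "?G \<cdot> dg ?P = (\<gamma> ?S \<cdot> ?P) \<cdot> dg ?P" by (simp add: perm2)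
    also have "\<dots> = \<gamma> ?S \<cdot> (?P \<cdot> dg ?P)" by (simp add: assoc)
    also have "\<dots> = \<gamma> ?S" by (simp add: uni2)
    finally show ?thesis by simp
  qed
  have dd: "dg (\<delta> ?S) = ?P \<cdot> (dg ?D \<cdot> (dg ?P \<otimes> dg ?P))"
  proof -
    have "dg (\<delta> ?S \<cdot> ?P) = dg ((?P \<otimes> ?P) \<cdot> ?D)" by (simp only: perm1)
    hence h: "dg ?P \<cdot> dg (\<delta> ?S) = dg ?D \<cdot> (dg ?P \<otimes> dg ?P)" by simp
    have "dg (\<delta> ?S) = (?P \<cdot> dg ?P) \<cdot> dg (\<delta> ?S)" by (simp add: uni2)
    also have "\<dots> = ?P \<cdot> (dg ?P \<cdot> dg (\<delta> ?S))" by (simp add: assoc)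
    finally show ?thesis unfolding h .
  qed
  have t: "(dg ?P \<otimes> dg ?P) \<cdot> (Id ?S \<otimes> ?P) = dg ?P \<otimes> ?I"
    by (simp add: interchange uni1)
  have "ep ?S = (?G \<cdot> dg ?P) \<cdot> ((?P \<cdot> (dg ?D \<cdot> (dg ?P \<otimes> dg ?P))) \<cdot> (Id ?S \<otimes> ?P))"
    unfolding ep_def g dd dstar by simp
  also have "\<dots> = ?G \<cdot> ((dg ?P \<cdot> ?P) \<cdot> (dg ?D \<cdot> ((dg ?P \<otimes> dg ?P) \<cdot> (Id ?S \<otimes> ?P))))"
    by (simp add: assoc)
  also have "\<dots> = ?G \<cdot> (dg ?D \<cdot> (dg ?P \<otimes> ?I))"
    unfolding t uni1 by simp
  finally have L: "ep ?S = ?G \<cdot> (dg ?D \<cdot> (dg ?P \<otimes> ?I))" .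
  have sn: "sg A A \<cdot> (dg ?P \<otimes> ?I) = (?I \<otimes> dg ?P) \<cdot> sg ?S A" using sym_nat[of "dg ?P" ?I] by simp
  have ds: "dg ?D \<cdot> sg A A = dg ?D"
  proof -
    have "dg (sg A A \<cdot> ?D) = dg ?D" by (simp only: cocomm)
    thus ?thesis by simp
  qed
  have "ep A \<cdot> sg ?S A = ?G \<cdot> (dg ?D \<cdot> ((?I \<otimes> dg ?P) \<cdot> sg ?S A))"
    unfolding ep_def by (simp add: assoc)
  also have "\<dots> = ?G \<cdot> ((dg ?D \<cdot> sg A A) \<cdot> (dg ?P \<otimes> ?I))"
    unfolding sn[symmetric] by (simp add: assoc)
  also have "\<dots> = ?G \<cdot> (dg ?D \<cdot> (dg ?P \<otimes> ?I))" unfolding ds ..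
  finally show ?thesis using L by simp
qed
end

theorem mainTheorem4:
  fixes C :: "('o, 'm) dsmc" and star :: "'o \<Rightarrow> 'o"
    and \<delta> \<gamma> d :: "'o \<Rightarrow> 'm" and eps :: "'o \<Rightarrow> 'm"
  assumes "dagger_compact_with_bases C star \<delta> \<gamma> d"
    and "\<And>A. eps A = c_comp C (\<gamma> A)
                 (c_comp C (c_dag C (\<delta> A)) (c_tensor C (c_id C A) (c_dag C (d A))))"
  shows "(\<forall>A. dagger_compact_structure C A (star A) (eps A)) \<and>
         (\<forall>A. eps (star A) = c_comp C (eps A) (c_sym C (star A) A)) \<and>
         dagger_compact_category C star eps"
proof -
  have ds: "is_dagger_smc C" using assms(1) unfolding dagger_compact_with_bases_def by auto
  interpret bctx C star \<delta> \<gamma> d using ds assms(1) by (unfold_locales) auto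
  have e: "eps = ep" using assms(2) unfolding ep_def by auto
  have s1: "\<forall>A. dagger_compact_structure C A (star A) (eps A)"
    unfolding e dagger_compact_structure_def c_hom_def using part1 by auto
  have s2: "\<forall>A. eps (star A) = c_comp C (eps A) (c_sym C (star A) A)"
    unfolding e using part2 by auto
  show ?thesis using s1 s2 ds unfolding dagger_compact_category_def by auto
qed

end
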